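(* Let $\Sigma\subseteq\mathcal L$ be closed under subformulas and let $\mathcal W=(W,\le,\ell,R)$ be a $\Sigma$-labelled system whose relation $R$ is $\omega$-sensible. Then the relation $R^+_{\mathcal Q}$ of its quotient $\mathcal Q=(W/{\sim},\le_{\mathcal Q},\ell_{\mathcal Q},R^+_{\mathcal Q})$ is $\omega$-sensible; hence $\mathcal Q$ is a $\Sigma$-quasimodel.
   Context: $\mathcal L$: formulas over propositional variables with $\wedge,\vee,\Rightarrow,\Leftarrow$ (co-implication), $\mathsf X,\mathsf Y,\mathsf G,\mathsf H,\mathsf U,\mathsf S$. Let $\Sigma\subseteq\mathcal L$ be closed under subformulas. A $\Sigma$-type is $\Phi\subseteq\Sigma$ such that: for $\varphi\wedge\psi\in\Sigma$, $\varphi\wedge\psi\in\Phi$ iff $\varphi,\psi\in\Phi$; for $\varphi\vee\psi\in\Sigma$, $\varphi\vee\psi\in\Phi$ iff $\varphi\in\Phi$ or $\psi\in\Phi$; for $\varphi\Rightarrow\psi\in\Sigma$, ($\varphi\Rightarrow\psi\in\Phi$ implies $\varphi\notin\Phi$ or $\psi\in\Phi$) and ($\psi\in\Phi$ implies $\varphi\Rightarrow\psi\in\Phi$); for $\varphi\Leftarrow\psi\in\Sigma$, ($\varphi\Leftarrow\psi\in\Phi$ implies $\varphi\in\Phi$) and ($\varphi\in\Phi,\psi\notin\Phi$ implies $\varphi\Leftarrow\psi\in\Phi$). A poset is locally linear if it is a disjoint union of linear posets; write $a\lessgtr b$ if $a\le b$ or $b\le a$. A $\Sigma$-labelled space is $(W,\le,\ell)$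 with $(W,\le)$ locally linear, $\ell\colon W\to$ $\Sigma$-types, $w\le v\Rightarrow\ell(w)\supseteq\ell(v)$, such that whenever $\varphi\Rightarrow\psi\in\Sigma\setminus\ell(w)$ there is $v\le w$ with $\varphi\in\ell(v)$, $\psi\notin\ell(v)$, and whenever $\varphi\Leftarrow\psi\in\ell(w)$ there is $v\ge w$ with $\varphi\in\ell(v)$, $\psi\notin\ell(v)$. A relation $R\subseteq W\times W$ is convex if every image set and every preimage set of a point is convex in $\le$; fully confluent if (forth–down) $x\le x'Ry'$ implies $xRy\le y'$ for some $y$; (forth–up) $x'\ge xRy$ implies $x'Ry'\ge y$ for some $y'$; (back–down) $x'Ry'\ge y$ implies $x'\ge xRy$ for some $x$; (back–up) $xRy\le y'$ implies $x\le x'Ry'$ for some $x'$; bi-serial if every point has an $R$-successor and an $R$-predecessor. A pair $(\Phi,\Psi)$ of $\Sigma$-types is sensible if for formulas in $\Sigma$: $\mathsf X\varphi\in\Phi\iff\varphi\in\Psi$; $\mathsf Y\varphi\in\Psi\iff\varphi\in\Phi$; $\mathsf G\varphi\in\Phi\iff(\varphi\in\Phi\wedge\mathsf G\varphi\in\Psi)$; $\mathsf H\varphi\in\Psi\iff(\varphi\in\Psi\wedge\mathsf H\varphi\in\Phi)$; $\varphi\,\mathsf U\,\psi\in\Phi\iff(\psi\in\Phi$ or ($\varphi\in\Phi$ and $\varphi\,\mathsf U\,\psi\in\Psi$)); $\varphi\,\mathsf S\,\psi\in\Psi\iff(\psi\in\Psi$ or ($\varphi\in\Psi$ and $\varphi\,\mathsf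 S\,\psi\in\Phi$)). $R$ is sensible if $wRv$ implies $(\ell(w),\ell(v))$ sensible. $R$ is $\omega$-sensible if: $\mathsf G\varphi\in\Sigma\setminus\ell(w)$ implies some $v$ with $wR^nv$ ($n\ge0$) and $\varphi\notin\ell(v)$; $\mathsf H\varphi\in\Sigma\setminus\ell(w)$ implies some $v$ with $vR^nw$ and $\varphi\notin\ell(v)$; $\varphi\,\mathsf U\,\psi\in\ell(w)$ implies some $v$ with $wR^nv$ and $\psi\in\ell(v)$; $\varphi\,\mathsf S\,\psi\in\ell(w)$ implies some $v$ with $vR^nw$ and $\psi\in\ell(v)$. A $\Sigma$-labelled system is a $\Sigma$-labelled space with a bi-serial, fully confluent, convex, sensible relation; a $\Sigma$-quasimodel is a $\Sigma$-labelled system whose relation is $\omega$-sensible. Quotient: $L(w)=\{\ell(v): v\lessgtr w\}$; $w\sim v$ iff $\ell(w)=\ell(v)$ and $L(w)=L(v)$; $[w]\le_{\mathcal Q}[v]$ iff $L(w)=L(v)$ and $\ell(w)\supseteq\ell(v)$; $\ell_{\mathcal Q}([w])=\ell(w)$; $R_{\mathcal Q}$ is the smallest relation with $wRv\Rightarrow[w]R_{\mathcal Q}[v]$; $XR^+_{\mathcal Q}Y$ iff there are $X_1\le_{\mathcal Q}X\le_{\mathcal Q}X_2$, $Y_1\le_{\mathcal Q}Y\le_{\mathcal Q}Y_2$ with $X_2R_{\mathcal Q}Y_1$ and $X_1R_{\mathcal Q}Y_2$. *)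

theory Defs
  imports Main
begin

datatype 'p fm =
    Var 'p
  | And "'p fm" "'p fm"
  | Or "'p fm" "'p fm"
  | Imp "'p fm" "'p fm"
  | Coimp "'p fm" "'p fm"
  | Next "'p fm"
  | Prev "'p fm"
  | Glob "'p fm"
  | Hist "'p fm"
  | Until "'p fm" "'p fm"
  | Since "'p fm" "'p fm"

fun subfms :: "'p fm \<Rightarrow> 'p fm set" where
  "subfms (Var p) = {Var p}"
| "subfms (And a b) = insert (And a b) (subfms a \<union> subfms b)"
| "subfms (Or a b) = insert (Or a b) (subfms a \<union> subfms b)"
| "subfms (Imp a b) = insert (Imp a b) (subfms a \<union> subfms b)"
| "subfms (Coimp a b) = insert (Coimp a b) (subfms a \<union> subfms b)"
| "subfms (Next a) = insert (Next a) (subfms a)"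
| "subfms (Prev a) = insert (Prev a) (subfms a)"
| "subfms (Glob a) = insert (Glob a) (subfms a)"
| "subfms (Hist a) = insert (Hist a) (subfms a)"
| "subfms (Until a b) = insert (Until a b) (subfms a \<union> subfms b)"
| "subfms (Since a b) = insert (Since a b) (subfms a \<union> subfms b)"

definition subfm_closed :: "'p fm set \<Rightarrow> bool" where
  "subfm_closed \<Sigma> \<longleftrightarrow> (\<forall>\<phi>\<in>\<Sigma>. subfms \<phi> \<subseteq> \<Sigma>)"

definition is_type :: "'p fm set \<Rightarrow> 'p fm set \<Rightarrow> bool" where
  "is_type \<Sigma> \<Phi> \<longleftrightarrow> \<Phi> \<subseteq> \<Sigma> \<and>
    (\<forall>a b. And a b \<in> \<Sigma> \<longrightarrow> (And a b \<in> \<Phi> \<longleftrightarrow> a \<in> \<Phi> \<and> b \<in> \<Phi>)) \<and>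
    (\<forall>a b. Or a b \<in> \<Sigma> \<longrightarrow> (Or a b \<in> \<Phi> \<longleftrightarrow> a \<in> \<Phi> \<or> b \<in> \<Phi>)) \<and>
    (\<forall>a b. Imp a b \<in> \<Sigma> \<longrightarrow>
        (Imp a b \<in> \<Phi> \<longrightarrow> a \<notin> \<Phi> \<or> b \<in> \<Phi>) \<and> (b \<in> \<Phi> \<longrightarrow> Imp a b \<in> \<Phi>)) \<and>
    (\<forall>a b. Coimp a b \<in> \<Sigma> \<longrightarrow>
        (Coimp a b \<in> \<Phi> \<longrightarrow> a \<in> \<Phi>) \<and> (a \<in> \<Phi> \<and> b \<notin> \<Phi> \<longrightarrow> Coimp a b \<in> \<Phi>))"

definition partial_order_on_W :: "'w set \<Rightarrow> ('w \<Rightarrow> 'w \<Rightarrow> bool) \<Rightarrow> bool" where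
  "partial_order_on_W W le \<longleftrightarrow>
     (\<forall>a\<in>W. le a a) \<and>
     (\<forall>a\<in>W. \<forall>b\<in>W. le a b \<and> le b a \<longrightarrow> a = b) \<and>
     (\<forall>a\<in>W. \<forall>b\<in>W. \<forall>c\<in>W. le a b \<and> le b c \<longrightarrow> le a c)"

definition locally_linear :: "'w set \<Rightarrow> ('w \<Rightarrow> 'w \<Rightarrow> bool) \<Rightarrow> bool" where
  "locally_linear W le \<longleftrightarrow> partial_order_on_W W le \<and>
     (\<exists>P. (\<forall>B\<in>P. B \<noteq> {}) \<and> \<Union>P = W \<and>
          (\<forall>B\<in>P. \<forall>C\<in>P. B \<noteq> C \<longrightarrow> B \<inter> C = {}) \<and>
          (\<forall>a\<in>W. \<forall>b\<in>W. (le a b \<or> le b a) \<longleftrightarrow> (\<exists>B\<in>P. a \<in> B \<and> b \<in> B)))"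

definition comparable :: "('w \<Rightarrow> 'w \<Rightarrow> bool) \<Rightarrow> 'w \<Rightarrow> 'w \<Rightarrow> bool" where
  "comparable le a b \<longleftrightarrow> le a b \<or> le b a"

definition labelled_space ::
  "'p fm set \<Rightarrow> 'w set \<Rightarrow> ('w \<Rightarrow> 'w \<Rightarrow> bool) \<Rightarrow> ('w \<Rightarrow> 'p fm set) \<Rightarrow> bool" where
  "labelled_space \<Sigma> W le lab \<longleftrightarrow> locally_linear W le \<and>
     (\<forall>w\<in>W. is_type \<Sigma> (lab w)) \<and>
     (\<forall>w\<in>W. \<forall>v\<in>W. le w v \<longrightarrow> lab v \<subseteq> lab w) \<and>
     (\<forall>w\<in>W. \<forall>a b. Imp a b \<in> \<Sigma> - lab w \<longrightarrow>
        (\<exists>v\<in>W. le v w \<and> a \<in> lab v \<and> b \<notin> lab v)) \<and>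
     (\<forall>w\<in>W. \<forall>a b. Coimp a b \<in> lab w \<longrightarrow>
        (\<exists>v\<in>W. le w v \<and> a \<in> lab v \<and> b \<notin> lab v))"

definition convex_set :: "'w set \<Rightarrow> ('w \<Rightarrow> 'w \<Rightarrow> bool) \<Rightarrow> 'w set \<Rightarrow> bool" where
  "convex_set W le C \<longleftrightarrow>
     (\<forall>a\<in>W. \<forall>b\<in>W. \<forall>c\<in>W. a \<in> C \<and> c \<in> C \<and> le a b \<and> le b c \<longrightarrow> b \<in> C)"

definition convex_rel :: "'w set \<Rightarrow> ('w \<Rightarrow> 'w \<Rightarrow> bool) \<Rightarrow> ('w \<Rightarrow> 'w \<Rightarrow> bool) \<Rightarrow> bool" where
  "convex_rel W le R \<longleftrightarrow>
     (\<forall>x\<in>W. convex_set W le {y\<in>W. R x y} \<and> convex_set W le {y\<in>W. R y x})"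

definition fully_confluent ::
  "'w set \<Rightarrow> ('w \<Rightarrow> 'w \<Rightarrow> bool) \<Rightarrow> ('w \<Rightarrow> 'w \<Rightarrow> bool) \<Rightarrow> bool" where
  "fully_confluent W le R \<longleftrightarrow>
     \<comment> \<open>forth-down\<close>
     (\<forall>x\<in>W. \<forall>x'\<in>W. \<forall>y'\<in>W. le x x' \<and> R x' y' \<longrightarrow> (\<exists>y\<in>W. R x y \<and> le y y')) \<and>
     \<comment> \<open>forth-up\<close>
     (\<forall>x\<in>W. \<forall>x'\<in>W. \<forall>y\<in>W. le x x' \<and> R x y \<longrightarrow> (\<exists>y'\<in>W. R x' y' \<and> le y y')) \<and>
     \<comment> \<open>back-down\<close>
     (\<forall>x'\<in>W. \<forall>y'\<in>W. \<forall>y\<in>W. R x' y' \<and> le y y' \<longrightarrow> (\<exists>x\<in>W. le x x' \<and> R x y)) \<and>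
     \<comment> \<open>back-up\<close>
     (\<forall>x\<in>W. \<forall>y\<in>W. \<forall>y'\<in>W. R x y \<and> le y y' \<longrightarrow> (\<exists>x'\<in>W. le x x' \<and> R x' y'))"

definition bi_serial :: "'w set \<Rightarrow> ('w \<Rightarrow> 'w \<Rightarrow> bool) \<Rightarrow> bool" where
  "bi_serial W R \<longleftrightarrow> (\<forall>x\<in>W. (\<exists>y\<in>W. R x y) \<and> (\<exists>y\<in>W. R y x))"

definition sensible_pair :: "'p fm set \<Rightarrow> 'p fm set \<Rightarrow> 'p fm set \<Rightarrow> bool" where
  "sensible_pair \<Sigma> \<Phi> \<Psi> \<longleftrightarrow>
     (\<forall>a. Next a \<in> \<Sigma> \<longrightarrow> (Next a \<in> \<Phi> \<longleftrightarrow> a \<in> \<Psi>)) \<and>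
     (\<forall>a. Prev a \<in> \<Sigma> \<longrightarrow> (Prev a \<in> \<Psi> \<longleftrightarrow> a \<in> \<Phi>)) \<and>
     (\<forall>a. Glob a \<in> \<Sigma> \<longrightarrow> (Glob a \<in> \<Phi> \<longleftrightarrow> a \<in> \<Phi> \<and> Glob a \<in> \<Psi>)) \<and>
     (\<forall>a. Hist a \<in> \<Sigma> \<longrightarrow> (Hist a \<in> \<Psi> \<longleftrightarrow> a \<in> \<Psi> \<and> Hist a \<in> \<Phi>)) \<and>
     (\<forall>a b. Until a b \<in> \<Sigma> \<longrightarrow>
        (Until a b \<in> \<Phi> \<longleftrightarrow> b \<in> \<Phi> \<or> (a \<in> \<Phi> \<and> Until a b \<in> \<Psi>))) \<and>
     (\<forall>a b. Since a b \<in> \<Sigma> \<longrightarrow>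
        (Since a b \<in> \<Psi> \<longleftrightarrow> b \<in> \<Psi> \<or> (a \<in> \<Psi> \<and> Since a b \<in> \<Phi>)))"

definition sensible_rel ::
  "'p fm set \<Rightarrow> 'w set \<Rightarrow> ('w \<Rightarrow> 'p fm set) \<Rightarrow> ('w \<Rightarrow> 'w \<Rightarrow> bool) \<Rightarrow> bool" where
  "sensible_rel \<Sigma> W lab R \<longleftrightarrow> (\<forall>w\<in>W. \<forall>v\<in>W. R w v \<longrightarrow> sensible_pair \<Sigma> (lab w) (lab v))"

definition restr :: "'w set \<Rightarrow> ('w \<Rightarrow> 'w \<Rightarrow> bool) \<Rightarrow> 'w \<Rightarrow> 'w \<Rightarrow> bool" where
  "restr W R = (\<lambda>x y. x \<in> W \<and> y \<in> W \<and> R x y)"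

definition omega_sensible ::
  "'p fm set \<Rightarrow> 'w set \<Rightarrow> ('w \<Rightarrow> 'p fm set) \<Rightarrow> ('w \<Rightarrow> 'w \<Rightarrow> bool) \<Rightarrow> bool" where
  "omega_sensible \<Sigma> W lab R \<longleftrightarrow>
     (\<forall>w\<in>W. \<forall>a. Glob a \<in> \<Sigma> - lab w \<longrightarrow>
        (\<exists>v\<in>W. \<exists>n::nat. (restr W R ^^ n) w v \<and> a \<notin> lab v)) \<and>
     (\<forall>w\<in>W. \<forall>a. Hist a \<in> \<Sigma> - lab w \<longrightarrow>
        (\<exists>v\<in>W. \<exists>n::nat. (restr W R ^^ n) v w \<and> a \<notin> lab v)) \<and>
     (\<forall>w\<in>W. \<forall>a b. Until a b \<in> lab w \<longrightarrow>
        (\<exists>v\<in>W. \<exists>n::nat. (restr W R ^^ n) w v \<and> b \<in> lab v)) \<and>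
     (\<forall>w\<in>W. \<forall>a b. Since a b \<in> lab w \<longrightarrow>
        (\<exists>v\<in>W. \<exists>n::nat. (restr W R ^^ n) v w \<and> b \<in> lab v))"

definition labelled_system ::
  "'p fm set \<Rightarrow> 'w set \<Rightarrow> ('w \<Rightarrow> 'w \<Rightarrow> bool) \<Rightarrow> ('w \<Rightarrow> 'p fm set) \<Rightarrow> ('w \<Rightarrow> 'w \<Rightarrow> bool) \<Rightarrow> bool" where
  "labelled_system \<Sigma> W le lab R \<longleftrightarrow> labelled_space \<Sigma> W le lab \<and>
     (\<forall>x y. R x y \<longrightarrow> x \<in> W \<and> y \<in> W) \<and>
     bi_serial W R \<and> fully_confluent W le R \<and> convex_rel W le R \<and> sensible_rel \<Sigma> W lab R"

definition quasimodel ::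
  "'p fm set \<Rightarrow> 'w set \<Rightarrow> ('w \<Rightarrow> 'w \<Rightarrow> bool) \<Rightarrow> ('w \<Rightarrow> 'p fm set) \<Rightarrow> ('w \<Rightarrow> 'w \<Rightarrow> bool) \<Rightarrow> bool" where
  "quasimodel \<Sigma> W le lab R \<longleftrightarrow> labelled_system \<Sigma> W le lab R \<and> omega_sensible \<Sigma> W lab R"

definition Lset :: "'w set \<Rightarrow> ('w \<Rightarrow> 'w \<Rightarrow> bool) \<Rightarrow> ('w \<Rightarrow> 'p fm set) \<Rightarrow> 'w \<Rightarrow> 'p fm set set" where
  "Lset W le lab w = {lab v |v. v \<in> W \<and> comparable le v w}"

definition qequiv :: "'w set \<Rightarrow> ('w \<Rightarrow> 'w \<Rightarrow> bool) \<Rightarrow> ('w \<Rightarrow> 'p fm set) \<Rightarrow> 'w \<Rightarrow> 'w \<Rightarrow> bool" where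
  "qequiv W le lab w v \<longleftrightarrow> lab w = lab v \<and> Lset W le lab w = Lset W le lab v"

definition qclass :: "'w set \<Rightarrow> ('w \<Rightarrow> 'w \<Rightarrow> bool) \<Rightarrow> ('w \<Rightarrow> 'p fm set) \<Rightarrow> 'w \<Rightarrow> 'w set" where
  "qclass W le lab w = {v \<in> W. qequiv W le lab w v}"

definition qW :: "'w set \<Rightarrow> ('w \<Rightarrow> 'w \<Rightarrow> bool) \<Rightarrow> ('w \<Rightarrow> 'p fm set) \<Rightarrow> 'w set set" where
  "qW W le lab = qclass W le lab ` W"

definition qle :: "'w set \<Rightarrow> ('w \<Rightarrow> 'w \<Rightarrow> bool) \<Rightarrow> ('w \<Rightarrow> 'p fm set) \<Rightarrow> 'w set \<Rightarrow> 'w set \<Rightarrow> bool" where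
  "qle W le lab X Y \<longleftrightarrow> (\<exists>w\<in>W. \<exists>v\<in>W. X = qclass W le lab w \<and> Y = qclass W le lab v \<and>
       Lset W le lab w = Lset W le lab v \<and> lab v \<subseteq> lab w)"

definition qlab :: "('w \<Rightarrow> 'p fm set) \<Rightarrow> 'w set \<Rightarrow> 'p fm set" where
  "qlab lab X = lab (SOME w. w \<in> X)"

definition qR :: "'w set \<Rightarrow> ('w \<Rightarrow> 'w \<Rightarrow> bool) \<Rightarrow> ('w \<Rightarrow> 'p fm set) \<Rightarrow> ('w \<Rightarrow> 'w \<Rightarrow> bool) \<Rightarrow>
    'w set \<Rightarrow> 'w set \<Rightarrow> bool" where
  "qR W le lab R X Y \<longleftrightarrow> (\<exists>w v. R w v \<and> X = qclass W le lab w \<and> Y = qclass W le lab v)"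

definition qRplus :: "'w set \<Rightarrow> ('w \<Rightarrow> 'w \<Rightarrow> bool) \<Rightarrow> ('w \<Rightarrow> 'p fm set) \<Rightarrow> ('w \<Rightarrow> 'w \<Rightarrow> bool) \<Rightarrow>
    'w set \<Rightarrow> 'w set \<Rightarrow> bool" where
  "qRplus W le lab R X Y \<longleftrightarrow> (\<exists>X1 X2 Y1 Y2.
       qle W le lab X1 X \<and> qle W le lab X X2 \<and> qle W le lab Y1 Y \<and> qle W le lab Y Y2 \<and>
       qR W le lab R X2 Y1 \<and> qR W le lab R X1 Y2)"

end

theory Submission
  imports Defs
begin

lemma spD: assumes "sensible_pair S P Q" shows
  "Next a \<in> S \<Longrightarrow> Next a \<in> P \<longleftrightarrow> a \<in> Q"
  "Prev a \<in> S \<Longrightarrow> Prev a \<in> Q \<longleftrightarrow> a \<in> P"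
  "Glob a \<in> S \<Longrightarrow> Glob a \<in> P \<longleftrightarrow> a \<in> P \<and> Glob a \<in> Q"
  "Hist a \<in> S \<Longrightarrow> Hist a \<in> Q \<longleftrightarrow> a \<in> Q \<and> Hist a \<in> P"
  "Until a b \<in> S \<Longrightarrow> Until a b \<in> P \<longleftrightarrow> b \<in> P \<or> (a \<in> P \<and> Until a b \<in> Q)"
  "Since a b \<in> S \<Longrightarrow> Since a b \<in> Q \<longleftrightarrow> b \<in> Q \<or> (a \<in> Q \<and> Since a b \<in> P)"
  using assms unfolding sensible_pair_def by simp_all

lemma sp_combine:
  assumes A: "sensible_pair S X V" "sensible_pair S X V'" "V' \<subseteq> Y" "Y \<subseteq> V"
    "sensible_pair S U Y" "sensible_pair S U' Y" "X \<subseteq> U" "U' \<subseteq> X"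
  shows "sensible_pair S X Y"
  unfolding sensible_pair_def
  apply (intro conjI allI impI)
  subgoal for a using spD(1)[OF A(1), of a] spD(1)[OF A(2), of a] A(3,4) by blast
  subgoal for a using spD(2)[OF A(5), of a] spD(2)[OF A(6), of a] A(7,8) by blast
  subgoal for a using spD(3)[OF A(1), of a] spD(3)[OF A(2), of a] A(3,4) by blast
  subgoal for a using spD(4)[OF A(5), of a] spD(4)[OF A(6), of a] A(7,8) by blast
  subgoal for a b using spD(5)[OF A(1), of a b] spD(5)[OF A(2), of a b] A(3,4) by blast
  subgoal for a b using spD(6)[OF A(5), of a b] spD(6)[OF A(6), of a b] A(7,8) by blast
  done

locale qsys =
  fixes \<Sigma> :: "'p fm set" and W :: "'w set" and le R :: "'w \<Rightarrow> 'w \<Rightarrow> bool"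
    and lab :: "'w \<Rightarrow> 'p fm set"
  assumes LS: "labelled_system \<Sigma> W le lab R"
begin

abbreviation "cls \<equiv> qclass W le lab"
abbreviation "LL \<equiv> Lset W le lab"
abbreviation "QW \<equiv> qW W le lab"
abbreviation "QLE \<equiv> qle W le lab"
abbreviation "QR \<equiv> qR W le lab R"
abbreviation "QRP \<equiv> qRplus W le lab R"

lemma RW: "R x y \<Longrightarrow> x \<in> W \<and> y \<in> W"
  using LS unfolding labelled_system_def by blast

lemma space: "labelled_space \<Sigma> W le lab"
  using LS unfolding labelled_system_def by blast

lemma LLin: "locally_linear W le" using space unfolding labelled_space_def by blast

lemma po: "partial_order_on_W W le" using LLin unfolding locally_linear_def by blast

lemma le_refl: assumes "x \<in> W" shows "le x x"
proof -
  have "\<forall>a\<in>W. le a a" using po unfolding partial_order_on_W_def by (rule conjunct1)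
  thus ?thesis using assms by blast
qed
lemma mono: "w \<in> W \<Longrightarrow> v \<in> W \<Longrightarrow> le w v \<Longrightarrow> lab v \<subseteq> lab w"
  using space unfolding labelled_space_def by blast

lemma comp_trans:
  assumes "a \<in> W" "b \<in> W" "c \<in> W" "comparable le a b" "comparable le b c"
  shows "comparable le a c"
proof -
  have "\<exists>P. (\<forall>B\<in>P. B \<noteq> {}) \<and> \<Union>P = W \<and>
          (\<forall>B\<in>P. \<forall>C\<in>P. B \<noteq> C \<longrightarrow> B \<inter> C = {}) \<and>
          (\<forall>a\<in>W. \<forall>b\<in>W. (le a b \<or> le b a) \<longleftrightarrow> (\<exists>B\<in>P. a \<in> B \<and> b \<in> B))"
    using LLin unfolding locally_linear_def by (rule conjunct2)
  then obtain P where P1: "\<forall>B\<in>P. \<forall>C\<in>P. B \<noteq> C \<longrightarrow> B \<inter> C = {}"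
     and P2: "\<forall>a\<in>W. \<forall>b\<in>W. (le a b \<or> le b a) \<longleftrightarrow> (\<exists>B\<in>P. a \<in> B \<and> b \<in> B)"
    by (elim exE conjE)
  have P2': "comparable le x y \<longleftrightarrow> (\<exists>B\<in>P. x \<in> B \<and> y \<in> B)" if "x \<in> W" "y \<in> W" for x y
    using P2 that unfolding comparable_def by simp
  obtain B where B: "B \<in> P" "a \<in> B" "b \<in> B" using P2' assms by blast
  obtain C where C: "C \<in> P" "b \<in> C" "c \<in> C" using P2' assms by blast
  have "B = C" using P1 B C by blast
  thus ?thesis using P2' assms B C by blast
qed

lemma comp_sym: "comparable le a b \<Longrightarrow> comparable le b a"
  unfolding comparable_def by blast

lemma L_eq: assumes "w \<in> W" "v \<in> W" "comparable le w v" shows "LL w = LL v"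
proof -
  have eq: "comparable le u w \<longleftrightarrow> comparable le u v" if "u \<in> W" for u
  proof
    assume "comparable le u w" thus "comparable le u v" using comp_trans[of u w v] assms that by blast
  next
    assume "comparable le u v" thus "comparable le u w"
      using comp_trans[of u v w] comp_sym[OF assms(3)] assms that by blast
  qed
  show ?thesis unfolding Lset_def
  proof (rule Collect_cong)
    fix x show "(\<exists>u. x = lab u \<and> u \<in> W \<and> comparable le u w) \<longleftrightarrow> (\<exists>u. x = lab u \<and> u \<in> W \<and> comparable le u v)"
      using eq by blast
  qed
qed

lemma L_le: "w \<in> W \<Longrightarrow> v \<in> W \<Longrightarrow> le w v \<Longrightarrow> LL w = LL v"
  using L_eq unfolding comparable_def by blast

lemma cls_mem: "w \<in> W \<Longrightarrow> w \<in> cls w"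
  unfolding qclass_def qequiv_def by simp

lemma cls_eq_iff: assumes "w \<in> W" "v \<in> W" shows "cls w = cls v \<longleftrightarrow> lab w = lab v \<and> LL w = LL v"
proof
  assume "cls w = cls v"
  then have "v \<in> cls w" using cls_mem assms by simp
  thus "lab w = lab v \<and> LL w = LL v" unfolding qclass_def qequiv_def by simp
next
  assume "lab w = lab v \<and> LL w = LL v"
  thus "cls w = cls v" unfolding qclass_def qequiv_def by auto
qed

lemma qlab_cls: assumes w: "w \<in> W" shows "qlab lab (cls w) = lab w"
proof -
  have "(SOME u. u \<in> cls w) \<in> cls w" using cls_mem[OF w] by (rule someI)
  thus ?thesis unfolding qlab_def qclass_def qequiv_def by simp
qed

lemma qle_cls: "w \<in> W \<Longrightarrow> v \<in> W \<Longrightarrow> QLE (cls w) (cls v) \<longleftrightarrow> LL w = LL v \<and> lab v \<subseteq> lab w"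
proof -
  assume w: "w \<in> W" and v: "v \<in> W"
  show ?thesis
  proof
    assume "QLE (cls w) (cls v)"
    then obtain w' v' where h: "w' \<in> W" "v' \<in> W" "cls w = cls w'" "cls v = cls v'"
      "LL w' = LL v'" "lab v' \<subseteq> lab w'" unfolding qle_def by blast
    then have "lab w = lab w'" "LL w = LL w'" "lab v = lab v'" "LL v = LL v'"
      using cls_eq_iff w v by auto
    thus "LL w = LL v \<and> lab v \<subseteq> lab w" using h by simp
  next
    assume "LL w = LL v \<and> lab v \<subseteq> lab w"
    thus "QLE (cls w) (cls v)" unfolding qle_def using w v by blast
  qed
qed

lemma qle_le: "w \<in> W \<Longrightarrow> v \<in> W \<Longrightarrow> le w v \<Longrightarrow> QLE (cls w) (cls v)"
  using qle_cls L_le mono by blast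

lemma qR_I: "R w v \<Longrightarrow> QR (cls w) (cls v)"
  unfolding qR_def by blast

lemma qR_E: "QR X Y \<Longrightarrow> \<exists>w v. w \<in> W \<and> v \<in> W \<and> R w v \<and> X = cls w \<and> Y = cls v"
  unfolding qR_def using RW by blast

lemma qle_E: "QLE X Y \<Longrightarrow> \<exists>w v. w \<in> W \<and> v \<in> W \<and> X = cls w \<and> Y = cls v \<and> LL w = LL v \<and> lab v \<subseteq> lab w"
  unfolding qle_def by blast

lemma F2up:
  assumes x: "x \<in> W" and z: "z \<in> W" and L: "LL x = LL z" and s: "lab z \<subseteq> lab x"
  shows "\<exists>u\<in>W. le x u \<and> cls u = cls z"
proof -
  have "lab z \<in> LL z" unfolding Lset_def comparable_def using z le_refl by blast
  then have "lab z \<in> LL x" using L by simp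
  then obtain u where u: "u \<in> W" "comparable le u x" "lab u = lab z"
    unfolding Lset_def by blast
  have Lu: "LL u = LL x" using L_eq u x by blast
  show ?thesis
  proof (cases "le x u")
    case True
    then show ?thesis using u Lu L cls_eq_iff z by auto
  next
    case False
    then have "le u x" using u unfolding comparable_def by blast
    then have "lab x \<subseteq> lab u" using mono u x by blast
    then have "lab x = lab z" using u s by blast
    then show ?thesis using x z L cls_eq_iff le_refl by blast
  qed
qed

lemma F2down:
  assumes x: "x \<in> W" and z: "z \<in> W" and L: "LL x = LL z" and s: "lab x \<subseteq> lab z"
  shows "\<exists>u\<in>W. le u x \<and> cls u = cls z"
proof -
  have "lab z \<in> LL z" unfolding Lset_def comparable_def using z le_refl by blast
  then have "lab z \<in> LL x" using L by simp
  then obtain u where u: "u \<in> W" "comparable le u x" "lab u = lab z"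
    unfolding Lset_def by blast
  have Lu: "LL u = LL x" using L_eq u x by blast
  show ?thesis
  proof (cases "le u x")
    case True
    then show ?thesis using u Lu L cls_eq_iff z by auto
  next
    case False
    then have "le x u" using u unfolding comparable_def by blast
    then have "lab u \<subseteq> lab x" using mono u x by blast
    then have "lab x = lab z" using u s by blast
    then show ?thesis using x z L cls_eq_iff le_refl by blast
  qed
qed

lemma FC: "fully_confluent W le R" using LS unfolding labelled_system_def by blast

lemma FC4:
  "\<forall>x\<in>W. \<forall>x'\<in>W. \<forall>y'\<in>W. le x x' \<and> R x' y' \<longrightarrow> (\<exists>y\<in>W. R x y \<and> le y y')"
  "\<forall>x\<in>W. \<forall>x'\<in>W. \<forall>y\<in>W. le x x' \<and> R x y \<longrightarrow> (\<exists>y'\<in>W. R x' y' \<and> le y y')"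
  "\<forall>x'\<in>W. \<forall>y'\<in>W. \<forall>y\<in>W. R x' y' \<and> le y y' \<longrightarrow> (\<exists>x\<in>W. le x x' \<and> R x y)"
  "\<forall>x\<in>W. \<forall>y\<in>W. \<forall>y'\<in>W. R x y \<and> le y y' \<longrightarrow> (\<exists>x'\<in>W. le x x' \<and> R x' y')"
  using FC unfolding fully_confluent_def by simp_all

lemma FD: "x \<in> W \<Longrightarrow> x' \<in> W \<Longrightarrow> y' \<in> W \<Longrightarrow> le x x' \<Longrightarrow> R x' y' \<Longrightarrow> \<exists>y\<in>W. R x y \<and> le y y'"
  using FC4(1) by blast
lemma FU: "x \<in> W \<Longrightarrow> x' \<in> W \<Longrightarrow> y \<in> W \<Longrightarrow> le x x' \<Longrightarrow> R x y \<Longrightarrow> \<exists>y'\<in>W. R x' y' \<and> le y y'"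
  using FC4(2) by blast
lemma BD: "x' \<in> W \<Longrightarrow> y' \<in> W \<Longrightarrow> y \<in> W \<Longrightarrow> R x' y' \<Longrightarrow> le y y' \<Longrightarrow> \<exists>x\<in>W. le x x' \<and> R x y"
  using FC4(3) by blast
lemma BU: "x \<in> W \<Longrightarrow> y \<in> W \<Longrightarrow> y' \<in> W \<Longrightarrow> R x y \<Longrightarrow> le y y' \<Longrightarrow> \<exists>x'\<in>W. le x x' \<and> R x' y'"
  using FC4(4) by blast

lemma qFD: assumes "QLE X X'" "QR X' Y'" shows "\<exists>Y. QR X Y \<and> QLE Y Y'"
proof -
  obtain x x' where xx: "x \<in> W" "x' \<in> W" "X = cls x" "X' = cls x'" "LL x = LL x'" "lab x' \<subseteq> lab x"
    using qle_E[OF assms(1)] by blast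
  obtain w v where wv: "w \<in> W" "v \<in> W" "R w v" "X' = cls w" "Y' = cls v"
    using qR_E[OF assms(2)] by blast
  have e: "lab w = lab x'" "LL w = LL x'" using cls_eq_iff wv xx by auto
  obtain u where u: "u \<in> W" "le u w" "cls u = cls x"
    using F2down[of w x] wv xx e by auto
  obtain y where y: "y \<in> W" "R u y" "le y v" using FD u wv by blast
  have "QR X (cls y)" using qR_I[OF y(2)] u xx by simp
  moreover have "QLE (cls y) Y'" using qle_le y wv by simp
  ultimately show ?thesis by blast
qed

lemma qFU: assumes "QLE X X'" "QR X Y" shows "\<exists>Y'. QR X' Y' \<and> QLE Y Y'"
proof -
  obtain x x' where xx: "x \<in> W" "x' \<in> W" "X = cls x" "X' = cls x'" "LL x = LL x'" "lab x' \<subseteq> lab x"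
    using qle_E[OF assms(1)] by blast
  obtain w v where wv: "w \<in> W" "v \<in> W" "R w v" "X = cls w" "Y = cls v"
    using qR_E[OF assms(2)] by blast
  have e: "lab w = lab x" "LL w = LL x" using cls_eq_iff wv xx by auto
  obtain u where u: "u \<in> W" "le w u" "cls u = cls x'"
    using F2up[of w x'] wv xx e by auto
  obtain y where y: "y \<in> W" "R u y" "le v y" using FU[of w u v] u wv by blast
  have "QR X' (cls y)" using qR_I[OF y(2)] u xx by simp
  moreover have "QLE Y (cls y)" using qle_le y wv by simp
  ultimately show ?thesis by blast
qed

lemma qBD: assumes "QR X' Y'" "QLE Y Y'" shows "\<exists>X. QLE X X' \<and> QR X Y"
proof -
  obtain y y' where yy: "y \<in> W" "y' \<in> W" "Y = cls y" "Y' = cls y'" "LL y = LL y'" "lab y' \<subseteq> lab y"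
    using qle_E[OF assms(2)] by blast
  obtain w v where wv: "w \<in> W" "v \<in> W" "R w v" "X' = cls w" "Y' = cls v"
    using qR_E[OF assms(1)] by blast
  have e: "lab v = lab y'" "LL v = LL y'" using cls_eq_iff wv yy by auto
  obtain u where u: "u \<in> W" "le u v" "cls u = cls y"
    using F2down[of v y] wv yy e by auto
  obtain x where x: "x \<in> W" "le x w" "R x u" using BD[of w v u] u wv by blast
  have "QR (cls x) Y" using qR_I[OF x(3)] u yy by simp
  moreover have "QLE (cls x) X'" using qle_le x wv by simp
  ultimately show ?thesis by blast
qed

lemma qBU: assumes "QR X Y" "QLE Y Y'" shows "\<exists>X'. QLE X X' \<and> QR X' Y'"
proof -
  obtain y y' where yy: "y \<in> W" "y' \<in> W" "Y = cls y" "Y' = cls y'" "LL y = LL y'" "lab y' \<subseteq> lab y"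
    using qle_E[OF assms(2)] by blast
  obtain w v where wv: "w \<in> W" "v \<in> W" "R w v" "X = cls w" "Y = cls v"
    using qR_E[OF assms(1)] by blast
  have e: "lab v = lab y" "LL v = LL y" using cls_eq_iff wv yy by auto
  obtain u where u: "u \<in> W" "le v u" "cls u = cls y'"
    using F2up[of v y'] wv yy e by auto
  obtain x where x: "x \<in> W" "le w x" "R x u" using BU[of w v u] u wv by blast
  have "QR (cls x) Y'" using qR_I[OF x(3)] u yy by simp
  moreover have "QLE X (cls x)" using qle_le x wv by simp
  ultimately show ?thesis by blast
qed

lemma qle_trans: assumes "QLE A B" "QLE B C" shows "QLE A C"
proof -
  obtain a b where ab: "a \<in> W" "b \<in> W" "A = cls a" "B = cls b" "LL a = LL b" "lab b \<subseteq> lab a"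
    using qle_E[OF assms(1)] by blast
  obtain b' c where bc: "b' \<in> W" "c \<in> W" "B = cls b'" "C = cls c" "LL b' = LL c" "lab c \<subseteq> lab b'"
    using qle_E[OF assms(2)] by blast
  have "lab b = lab b'" "LL b = LL b'" using cls_eq_iff ab bc by auto
  thus ?thesis using qle_cls ab bc by auto
qed

lemma qW_I: "w \<in> W \<Longrightarrow> cls w \<in> QW" unfolding qW_def by blast
lemma qW_E: "X \<in> QW \<Longrightarrow> \<exists>w\<in>W. X = cls w" unfolding qW_def by blast

lemma qle_refl: "X \<in> QW \<Longrightarrow> QLE X X" using qW_E qle_cls by blast

lemma qR_QW: "QR X Y \<Longrightarrow> X \<in> QW \<and> Y \<in> QW" using qR_E qW_I by blast
lemma qle_QW: "QLE X Y \<Longrightarrow> X \<in> QW \<and> Y \<in> QW" using qle_E qW_I by blast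

lemma charF: assumes "QRP X Y" shows "\<exists>V V'. QR X V \<and> QLE V Y \<and> QR X V' \<and> QLE Y V'"
proof -
  obtain X1 X2 Y1 Y2 where h: "QLE X1 X" "QLE X X2" "QLE Y1 Y" "QLE Y Y2" "QR X2 Y1" "QR X1 Y2"
    using assms unfolding qRplus_def by blast
  obtain V where V: "QR X V" "QLE V Y1" using qFD h by blast
  obtain V' where V': "QR X V'" "QLE Y2 V'" using qFU h by blast
  show ?thesis using V V' h qle_trans by blast
qed

lemma charB: assumes "QRP X Y" shows "\<exists>U U'. QR U Y \<and> QLE U X \<and> QR U' Y \<and> QLE X U'"
proof -
  obtain X1 X2 Y1 Y2 where h: "QLE X1 X" "QLE X X2" "QLE Y1 Y" "QLE Y Y2" "QR X2 Y1" "QR X1 Y2"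
    using assms unfolding qRplus_def by blast
  obtain U where U: "QLE U X1" "QR U Y" using qBD h by blast
  obtain U' where U': "QLE X2 U'" "QR U' Y" using qBU h by blast
  show ?thesis using U U' h qle_trans by blast
qed

lemma QRP_F: "QR X V \<Longrightarrow> QLE V Y \<Longrightarrow> QR X V' \<Longrightarrow> QLE Y V' \<Longrightarrow> QRP X Y"
  unfolding qRplus_def using qle_refl qR_QW by blast

lemma QRP_B: "QR U Y \<Longrightarrow> QLE U X \<Longrightarrow> QR U' Y \<Longrightarrow> QLE X U' \<Longrightarrow> QRP X Y"
  unfolding qRplus_def using qle_refl qR_QW by blast

lemma QR_QRP: "QR X Y \<Longrightarrow> QRP X Y"
  using QRP_F qle_refl qR_QW by blast


lemma qle_lab: "QLE X Y \<Longrightarrow> qlab lab Y \<subseteq> qlab lab X"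
  using qle_E qlab_cls by metis

lemma qR_sens: assumes "QR X V" shows "sensible_pair \<Sigma> (qlab lab X) (qlab lab V)"
proof -
  obtain w v where "w \<in> W" "v \<in> W" "R w v" "X = cls w" "V = cls v" using qR_E[OF assms] by blast
  moreover have "sensible_rel \<Sigma> W lab R" using LS unfolding labelled_system_def by blast
  ultimately show ?thesis unfolding sensible_rel_def using qlab_cls by simp
qed

lemma q_sensible: "sensible_rel \<Sigma> QW (qlab lab) QRP"
  unfolding sensible_rel_def
proof (intro ballI impI)
  fix X Y assume "X \<in> QW" "Y \<in> QW" "QRP X Y"
  obtain V V' where F: "QR X V" "QLE V Y" "QR X V'" "QLE Y V'" using charF[OF \<open>QRP X Y\<close>] by blast
  obtain U U' where B: "QR U Y" "QLE U X" "QR U' Y" "QLE X U'" using charB[OF \<open>QRP X Y\<close>] by blast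
  show "sensible_pair \<Sigma> (qlab lab X) (qlab lab Y)"
    apply (rule sp_combine[of _ _ "qlab lab V" "qlab lab V'" _ "qlab lab U" "qlab lab U'"])
    using F B qR_sens qle_lab by auto
qed

lemma lin: assumes "x \<in> W" "y \<in> W" "LL x = LL y" shows "lab y \<subseteq> lab x \<or> lab x \<subseteq> lab y"
proof -
  have "lab y \<in> LL y" unfolding Lset_def comparable_def using assms le_refl by blast
  then have "lab y \<in> LL x" using assms by simp
  then obtain u where u: "u \<in> W" "comparable le u x" "lab u = lab y"
    unfolding Lset_def by blast
  thus ?thesis using mono assms unfolding comparable_def by metis
qed

lemma q_antisym: assumes "a \<in> QW" "b \<in> QW" "QLE a b" "QLE b a" shows "a = b"
proof -
  obtain x where x: "x \<in> W" "a = cls x" using qW_E assms(1) by blast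
  obtain y where y: "y \<in> W" "b = cls y" using qW_E assms(2) by blast
  have 1: "LL x = LL y \<and> lab y \<subseteq> lab x" using qle_cls[OF x(1) y(1)] assms(3) x y by simp
  have 2: "LL y = LL x \<and> lab x \<subseteq> lab y" using qle_cls[OF y(1) x(1)] assms(4) x y by simp
  have "lab x = lab y" "LL x = LL y" using 1 2 by auto
  thus "a = b" using x y cls_eq_iff[OF x(1) y(1)] by simp
qed

lemma q_po: "partial_order_on_W QW QLE"
  unfolding partial_order_on_W_def
  using qle_refl q_antisym qle_trans by blast

definition blk where "blk w = {X \<in> QW. \<exists>v\<in>W. X = cls v \<and> LL v = LL w}"

lemma blk_mem: assumes x: "x \<in> W" shows "cls x \<in> blk w \<longleftrightarrow> LL x = LL w"
proof
  assume "cls x \<in> blk w"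
  then obtain v where v: "v \<in> W" "cls x = cls v" "LL v = LL w" unfolding blk_def by blast
  then have "LL x = LL v" using cls_eq_iff x by blast
  thus "LL x = LL w" using v by simp
next
  assume "LL x = LL w"
  thus "cls x \<in> blk w" unfolding blk_def using x qW_I by blast
qed

lemma q_ll: "locally_linear QW QLE"
  unfolding locally_linear_def
proof (intro conjI q_po exI[of _ "blk ` W"])
  show "\<forall>B\<in>blk ` W. B \<noteq> {}"
  proof
    fix B assume "B \<in> blk ` W"
    then obtain w where "w \<in> W" "B = blk w" by blast
    then have "cls w \<in> B" using blk_mem by blast
    thus "B \<noteq> {}" by blast
  qed
  show "\<Union> (blk ` W) = QW"
  proof
    show "\<Union> (blk ` W) \<subseteq> QW" unfolding blk_def by blast
    show "QW \<subseteq> \<Union> (blk ` W)"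
    proof
      fix X assume "X \<in> QW"
      then obtain w where w: "w \<in> W" "X = cls w" using qW_E by blast
      then have "X \<in> blk w" using blk_mem by blast
      thus "X \<in> \<Union> (blk ` W)" using w by blast
    qed
  qed
  show "\<forall>B\<in>blk ` W. \<forall>C\<in>blk ` W. B \<noteq> C \<longrightarrow> B \<inter> C = {}"
  proof (intro ballI impI)
    fix B C assume "B \<in> blk ` W" "C \<in> blk ` W" "B \<noteq> C"
    then obtain b c where bc: "b \<in> W" "c \<in> W" "B = blk b" "C = blk c" by blast
    show "B \<inter> C = {}"
    proof (rule ccontr)
      assume "B \<inter> C \<noteq> {}"
      then obtain X where "X \<in> blk b" "X \<in> blk c" using bc by blast
      then obtain x where "x \<in> W" "X = cls x" unfolding blk_def using qW_E by blast
      then have "LL b = LL c" using blk_mem[of x] \<open>X \<in> blk b\<close> \<open>X \<in> blk c\<close> by simp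
      then have "B = C" using bc unfolding blk_def by simp
      thus False using \<open>B \<noteq> C\<close> by simp
    qed
  qed
  show "\<forall>a\<in>QW. \<forall>b\<in>QW. (QLE a b \<or> QLE b a) = (\<exists>B\<in>blk ` W. a \<in> B \<and> b \<in> B)"
  proof (intro ballI)
    fix a b assume "a \<in> QW" "b \<in> QW"
    then obtain x y where xy: "x \<in> W" "y \<in> W" "a = cls x" "b = cls y" using qW_E by blast
    have "(QLE a b \<or> QLE b a) \<longleftrightarrow> LL x = LL y"
      using xy lin[of x y] qle_cls[of x y] qle_cls[of y x] by auto
    also have "\<dots> \<longleftrightarrow> (\<exists>B\<in>blk ` W. a \<in> B \<and> b \<in> B)"
    proof
      assume "LL x = LL y" thus "\<exists>B\<in>blk ` W. a \<in> B \<and> b \<in> B" using xy blk_mem[of x x] blk_mem[of y x] by auto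
    next
      assume "\<exists>B\<in>blk ` W. a \<in> B \<and> b \<in> B"
      then obtain w where "w \<in> W" "a \<in> blk w" "b \<in> blk w" by blast
      thus "LL x = LL y" using xy blk_mem[of x w] blk_mem[of y w] by simp
    qed
    finally show "(QLE a b \<or> QLE b a) = (\<exists>B\<in>blk ` W. a \<in> B \<and> b \<in> B)" .
  qed
qed

lemma SP:
  "\<forall>w\<in>W. is_type \<Sigma> (lab w)"
  "\<forall>w\<in>W. \<forall>a b. Imp a b \<in> \<Sigma> - lab w \<longrightarrow> (\<exists>v\<in>W. le v w \<and> a \<in> lab v \<and> b \<notin> lab v)"
  "\<forall>w\<in>W. \<forall>a b. Coimp a b \<in> lab w \<longrightarrow> (\<exists>v\<in>W. le w v \<and> a \<in> lab v \<and> b \<notin> lab v)"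
  using space unfolding labelled_space_def by simp_all

lemma q_space: "labelled_space \<Sigma> QW QLE (qlab lab)"
  unfolding labelled_space_def
proof (intro conjI q_ll ballI allI impI)
  fix X assume "X \<in> QW"
  then obtain w where "w \<in> W" "X = cls w" using qW_E by blast
  thus "is_type \<Sigma> (qlab lab X)" using SP(1) qlab_cls by simp
next
  fix X Y assume "X \<in> QW" "Y \<in> QW" and h: "QLE X Y"
  show "qlab lab Y \<subseteq> qlab lab X" using h by (rule qle_lab)
next
  fix X a b assume X: "X \<in> QW" and ab: "Imp a b \<in> \<Sigma> - qlab lab X"
  obtain w where w: "w \<in> W" "X = cls w" using qW_E X by blast
  then have "Imp a b \<in> \<Sigma> - lab w" using ab qlab_cls by simp
  then obtain v where v: "v \<in> W" "le v w" "a \<in> lab v" "b \<notin> lab v"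
    using SP(2) w by blast
  show "\<exists>Y\<in>QW. QLE Y X \<and> a \<in> qlab lab Y \<and> b \<notin> qlab lab Y"
    using v w qW_I[OF v(1)] qle_le[OF v(1) w(1) v(2)] qlab_cls[OF v(1)] by auto
next
  fix X a b assume X: "X \<in> QW" and ab: "Coimp a b \<in> qlab lab X"
  obtain w where w: "w \<in> W" "X = cls w" using qW_E X by blast
  then have "Coimp a b \<in> lab w" using ab qlab_cls by simp
  then obtain v where v: "v \<in> W" "le w v" "a \<in> lab v" "b \<notin> lab v"
    using SP(3) w by blast
  show "\<exists>Y\<in>QW. QLE X Y \<and> a \<in> qlab lab Y \<and> b \<notin> qlab lab Y"
    using v w qW_I[OF v(1)] qle_le[OF w(1) v(1) v(2)] qlab_cls[OF v(1)] by auto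
qed

lemma q_bi: "bi_serial QW QRP"
  unfolding bi_serial_def
proof (intro ballI conjI)
  fix X assume "X \<in> QW"
  then obtain w where w: "w \<in> W" "X = cls w" using qW_E by blast
  have bs: "bi_serial W R" using LS unfolding labelled_system_def by blast
  obtain v where "v \<in> W" "R w v" using bs w unfolding bi_serial_def by blast
  thus "\<exists>Y\<in>QW. QRP X Y" using w qR_I QR_QRP qW_I by blast
  obtain u where "u \<in> W" "R u w" using bs w unfolding bi_serial_def by blast
  thus "\<exists>Y\<in>QW. QRP Y X" using w qR_I QR_QRP qW_I by blast
qed

lemma q_fc: "fully_confluent QW QLE QRP"
  unfolding fully_confluent_def
proof (intro conjI ballI impI)
  fix X X' Y' assume "X \<in> QW" "X' \<in> QW" "Y' \<in> QW" and h: "QLE X X' \<and> QRP X' Y'"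
  obtain V V' where F: "QR X' V" "QLE V Y'" using charF h by blast
  obtain V0 where "QR X V0" "QLE V0 V" using qFD h F by blast
  thus "\<exists>Y\<in>QW. QRP X Y \<and> QLE Y Y'" using F QR_QRP qle_trans qR_QW by blast
next
  fix X X' Y assume "X \<in> QW" "X' \<in> QW" "Y \<in> QW" and h: "QLE X X' \<and> QRP X Y"
  obtain V' where F: "QR X V'" "QLE Y V'" using charF h by blast
  obtain V0 where "QR X' V0" "QLE V' V0" using qFU h F by blast
  thus "\<exists>Y'\<in>QW. QRP X' Y' \<and> QLE Y Y'" using F QR_QRP qle_trans qR_QW by blast
next
  fix X' Y' Y assume "X' \<in> QW" "Y' \<in> QW" "Y \<in> QW" and h: "QRP X' Y' \<and> QLE Y Y'"
  obtain U where B: "QR U Y'" "QLE U X'" using charB h by blast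
  obtain U0 where "QLE U0 U" "QR U0 Y" using qBD h B by blast
  thus "\<exists>X\<in>QW. QLE X X' \<and> QRP X Y" using B QR_QRP qle_trans qR_QW by blast
next
  fix X Y Y' assume "X \<in> QW" "Y \<in> QW" "Y' \<in> QW" and h: "QRP X Y \<and> QLE Y Y'"
  obtain U' where B: "QR U' Y" "QLE X U'" using charB h by blast
  obtain U0 where "QLE U' U0" "QR U0 Y'" using qBU h B by blast
  thus "\<exists>X'\<in>QW. QLE X X' \<and> QRP X' Y'" using B QR_QRP qle_trans qR_QW by blast
qed

lemma q_convex: "convex_rel QW QLE QRP"
  unfolding convex_rel_def convex_set_def
proof (intro ballI conjI impI)
  fix X A B C assume "X \<in> QW" "A \<in> QW" "B \<in> QW" "C \<in> QW"
    and h: "A \<in> {Y \<in> QW. QRP X Y} \<and> C \<in> {Y \<in> QW. QRP X Y} \<and> QLE A B \<and> QLE B C"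
  obtain V where V: "QR X V" "QLE V A" using charF h by blast
  obtain V' where V': "QR X V'" "QLE C V'" using charF h by blast
  have "QRP X B" using QRP_F[OF V(1) _ V'(1)] V V' h qle_trans by blast
  thus "B \<in> {Y \<in> QW. QRP X Y}" using \<open>B \<in> QW\<close> by simp
next
  fix X A B C assume "X \<in> QW" "A \<in> QW" "B \<in> QW" "C \<in> QW"
    and h: "A \<in> {Y \<in> QW. QRP Y X} \<and> C \<in> {Y \<in> QW. QRP Y X} \<and> QLE A B \<and> QLE B C"
  obtain U where U: "QR U X" "QLE U A" using charB h by blast
  obtain U' where U': "QR U' X" "QLE C U'" using charB h by blast
  have "QRP B X" using QRP_B[OF U(1) _ U'(1)] U U' h qle_trans by blast
  thus "B \<in> {Y \<in> QW. QRP Y X}" using \<open>B \<in> QW\<close> by simp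
qed

lemma q_inW: "QRP X Y \<Longrightarrow> X \<in> QW \<and> Y \<in> QW"
  using charF qR_QW qle_QW by blast

lemma q_system: "labelled_system \<Sigma> QW QLE (qlab lab) QRP"
  unfolding labelled_system_def
  using q_space q_inW q_bi q_fc q_convex q_sensible by blast

lemma path: "(restr W R ^^ n) w v \<Longrightarrow> w \<in> W \<Longrightarrow> (restr QW QRP ^^ n) (cls w) (cls v)"
proof (induction n arbitrary: v)
  case 0
  then show ?case by simp
next
  case (Suc n)
  from Suc.prems obtain u where u: "(restr W R ^^ n) w u" "restr W R u v" by auto
  have "restr QW QRP (cls u) (cls v)" using u(2) unfolding restr_def
    using qR_I QR_QRP qW_I by blast
  thus ?case using Suc.IH[OF u(1) Suc.prems(2)] by auto
qed

lemma q_omega: assumes "omega_sensible \<Sigma> W lab R" shows "omega_sensible \<Sigma> QW (qlab lab) QRP"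
  unfolding omega_sensible_def
proof (intro conjI ballI allI impI)
  fix X a assume X: "X \<in> QW" and h: "Glob a \<in> \<Sigma> - qlab lab X"
  obtain w where w: "w \<in> W" "X = cls w" using qW_E X by blast
  then obtain v n where v: "v \<in> W" and p: "(restr W R ^^ n) w v" and c: "a \<notin> lab v"
    using assms h qlab_cls[OF w(1)] w(2) unfolding omega_sensible_def by blast
  thus "\<exists>V\<in>QW. \<exists>n. (restr QW QRP ^^ n) X V \<and> a \<notin> qlab lab V"
    using path[OF p w(1)] qW_I[OF v] qlab_cls[OF v] w c by auto
next
  fix X a assume X: "X \<in> QW" and h: "Hist a \<in> \<Sigma> - qlab lab X"
  obtain w where w: "w \<in> W" "X = cls w" using qW_E X by blast
  then obtain v n where v: "v \<in> W" and p: "(restr W R ^^ n) v w" and c: "a \<notin> lab v"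
    using assms h qlab_cls[OF w(1)] w(2) unfolding omega_sensible_def by blast
  thus "\<exists>V\<in>QW. \<exists>n. (restr QW QRP ^^ n) V X \<and> a \<notin> qlab lab V"
    using path[OF p v] qW_I[OF v] qlab_cls[OF v] w c by auto
next
  fix X a b assume X: "X \<in> QW" and h: "Until a b \<in> qlab lab X"
  obtain w where w: "w \<in> W" "X = cls w" using qW_E X by blast
  then obtain v n where v: "v \<in> W" and p: "(restr W R ^^ n) w v" and c: "b \<in> lab v"
    using assms h qlab_cls[OF w(1)] w(2) unfolding omega_sensible_def by blast
  thus "\<exists>V\<in>QW. \<exists>n. (restr QW QRP ^^ n) X V \<and> b \<in> qlab lab V"
    using path[OF p w(1)] qW_I[OF v] qlab_cls[OF v] w c by auto
next
  fix X a b assume X: "X \<in> QW" and h: "Since a b \<in> qlab lab X"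
  obtain w where w: "w \<in> W" "X = cls w" using qW_E X by blast
  then obtain v n where v: "v \<in> W" and p: "(restr W R ^^ n) v w" and c: "b \<in> lab v"
    using assms h qlab_cls[OF w(1)] w(2) unfolding omega_sensible_def by blast
  thus "\<exists>V\<in>QW. \<exists>n. (restr QW QRP ^^ n) V X \<and> b \<in> qlab lab V"
    using path[OF p v] qW_I[OF v] qlab_cls[OF v] w c by auto
qed

end

theorem lemma6p3:
  fixes \<Sigma> :: "'p fm set" and W :: "'w set" and le R :: "'w \<Rightarrow> 'w \<Rightarrow> bool"
    and lab :: "'w \<Rightarrow> 'p fm set"
  assumes "subfm_closed \<Sigma>"
    and "labelled_system \<Sigma> W le lab R"
    and "omega_sensible \<Sigma> W lab R"
  shows "omega_sensible \<Sigma> (qW W le lab) (qlab lab) (qRplus W le lab R)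
       \<and> quasimodel \<Sigma> (qW W le lab) (qle W le lab) (qlab lab) (qRplus W le lab R)"
proof -
  interpret qsys \<Sigma> W le R lab using assms(2) by unfold_locales
  show ?thesis using q_omega[OF assms(3)] q_system unfolding quasimodel_def by blast
qed

end
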